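(* Let $\{w^k\}$ be generated by Algorithm 2 (running infinitely) and suppose the sequence $\{\varepsilon^k\}$ is bounded. Then each accumulation point $\bar w$ of $\{w^k\}$ is an M-stationary point of the feasibility problem $\min_w\frac12 d_C^2(G(w))$ s.t. $w\in D$, i.e., $\bar w\in D$ and $0\in G'(\bar w)^*[G(\bar w)-P_C(G(\bar w))]+\mathcal N^{\lim}_D(\bar w)$.
   Context: Standing setting: $\mathbb W,\mathbb Y$ Euclidean spaces; (P) is $\min f(w)$ s.t. $G(w)\in C$, $w\in D$, with $f\colon\mathbb W\to\mathbb R$, $G\colon\mathbb W\to\mathbb Y$ continuously differentiable, $C\subset\mathbb Y$ nonempty closed convex, $D\subset\mathbb W$ nonempty closed. $P_C$ is the Euclidean projection onto $C$, $d_C(y)=\|y-P_C(y)\|$; $\mathcal N^{\lim}_D(\bar w):=\limsup_{w\to\bar w}\operatorname{cone}(w-\Pi_D(w))$ for $\bar w\in D$ ($\Pi_D$ multivalued projection, outer set limit), $\varnothing$ for $\bar w\notin D$. Augmented Lagrangian $\mathcal L_\rho(w,\lambda):=f(w)+\frac\rho2 d_C^2(G(w)+\lambda/\rho)$; $V_\rho(w,u):=\|G(w)-P_C(G(w)+u/\rho)\|$. Algorithm 2: data $\rho_0>0$, $\beta>1$, $\eta\in(0,1)$, $w^0\in D$, a nonempty bounded set $U\subset\mathbb Y$. For $k=0,1,\dots$: choose $u^k\in U$; compute $w^{k+1}$ and $\varepsilon^{k+1}\in\mathbb W$ with $\varepsilon^{k+1}\in\nabla_w\mathcal L_{\rho_k}(w^{k+1},u^k)+\mathcal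 N^{\lim}_D(w^{k+1})$ (so $w^{k+1}\in D$); set $\lambda^{k+1}:=\rho_k[G(w^{k+1})+u^k/\rho_k-P_C(G(w^{k+1})+u^k/\rho_k)]$; if $k=0$ or $V_{\rho_k}(w^{k+1},u^k)\le\eta V_{\rho_{k-1}}(w^k,u^{k-1})$ set $\rho_{k+1}:=\rho_k$, else $\rho_{k+1}:=\beta\rho_k$. *)

theory Defs
  imports "HOL-Analysis.Analysis"
begin

definition projC :: "'y::euclidean_space set \<Rightarrow> 'y \<Rightarrow> 'y" where
  "projC C y = closest_point C y"

definition distC :: "'y::euclidean_space set \<Rightarrow> 'y \<Rightarrow> real" where
  "distC C y = norm (y - projC C y)"

definition projSet :: "'w::euclidean_space set \<Rightarrow> 'w \<Rightarrow> 'w set" where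
  "projSet D w = {p \<in> D. dist w p = infdist w D}"

definition limNormal :: "'w::euclidean_space set \<Rightarrow> 'w \<Rightarrow> 'w set" where
  "limNormal D wbar =
     (if wbar \<in> D then
        {v. \<exists>x vs. x \<longlonglongrightarrow> wbar \<and> vs \<longlonglongrightarrow> v \<and>
              (\<forall>k. vs k \<in> {t *\<^sub>R (x k - p) | t p. t \<ge> 0 \<and> p \<in> projSet D (x k)})}
      else {})"

definition grad :: "('w::euclidean_space \<Rightarrow> real) \<Rightarrow> 'w \<Rightarrow> 'w" where
  "grad F w = (THE g. GDERIV F w :> g)"

definition augLag ::
  "('w::euclidean_space \<Rightarrow> real) \<Rightarrow> ('w \<Rightarrow> 'y::euclidean_space) \<Rightarrow> 'y set
     \<Rightarrow> real \<Rightarrow> 'w \<Rightarrow> 'y \<Rightarrow> real" where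
  "augLag f G C \<rho> w lam = f w + \<rho> / 2 * (distC C (G w + lam /\<^sub>R \<rho>))\<^sup>2"

definition Vfun ::
  "('w::euclidean_space \<Rightarrow> 'y::euclidean_space) \<Rightarrow> 'y set \<Rightarrow> real \<Rightarrow> 'w \<Rightarrow> 'y \<Rightarrow> real" where
  "Vfun G C \<rho> w u = norm (G w - projC C (G w + u /\<^sub>R \<rho>))"

end

theory Submission imports Defs begin

lemma sq_remainder:
  fixes y y' :: "'a::euclidean_space"
  assumes C: "convex C" "closed C" "C \<noteq> {}"
  defines "P \<equiv> closest_point C"
  shows "\<bar>(norm (y' - P y'))\<^sup>2 - (norm (y - P y))\<^sup>2 - 2 * inner (y - P y) (y' - y)\<bar> \<le> (norm (y' - y))\<^sup>2"
proof -
  define a where "a = y - P y"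
  define h where "h = y' - y"
  have up: "norm (y' - P y') \<le> norm (y' - P y)"
    using closest_point_le[OF C(2) closest_point_in_set[OF C(2,3)], of y' y] unfolding P_def dist_norm .
  have lo: "norm (y - P y) \<le> norm (y - P y')"
    using closest_point_le[OF C(2) closest_point_in_set[OF C(2,3)], of y y'] unfolding P_def dist_norm .
  have lip: "norm (P y - P y') \<le> norm h"
    using closest_point_lipschitz[OF C, of y y'] unfolding P_def dist_norm h_def
    by (simp add: norm_minus_commute)
  have e1: "y' - P y = a + h" by (simp add: a_def h_def)
  have e2: "y - P y' = a + (P y - P y')" by (simp add: a_def)
  have e3: "y' - P y' = (y - P y') + h" by (simp add: h_def)
  have u: "(norm (y' - P y'))\<^sup>2 \<le> (norm a)\<^sup>2 + 2 * inner a h + (norm h)\<^sup>2"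
  proof -
    have "(norm (y' - P y'))\<^sup>2 \<le> (norm (a + h))\<^sup>2" using up e1 by (simp add: power_mono)
    also have "\<dots> = (norm a)\<^sup>2 + 2 * inner a h + (norm h)\<^sup>2"
      by (simp add: power2_norm_eq_inner inner_add algebra_simps inner_commute)
    finally show ?thesis .
  qed
  have cs: "\<bar>inner (P y - P y') h\<bar> \<le> (norm h)\<^sup>2"
  proof -
    have "\<bar>inner (P y - P y') h\<bar> \<le> norm (P y - P y') * norm h" by (rule Cauchy_Schwarz_ineq2)
    also have "\<dots> \<le> norm h * norm h" using lip by (simp add: mult_right_mono)
    finally show ?thesis by (simp add: power2_eq_square)
  qed
  have l: "(norm a)\<^sup>2 + 2 * inner a h - (norm h)\<^sup>2 \<le> (norm (y' - P y'))\<^sup>2"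
  proof -
    have "(norm a)\<^sup>2 \<le> (norm (y - P y'))\<^sup>2" using lo by (simp add: a_def power_mono)
    moreover have "(norm (y' - P y'))\<^sup>2 = (norm (y - P y'))\<^sup>2 + 2 * inner (y - P y') h + (norm h)\<^sup>2"
      unfolding e3 by (simp add: power2_norm_eq_inner inner_add algebra_simps inner_commute)
    moreover have "inner (y - P y') h = inner a h + inner (P y - P y') h"
      unfolding e2 by (simp add: inner_add_left)
    ultimately show ?thesis using cs by linarith
  qed
  show ?thesis using u l unfolding a_def[symmetric] h_def[symmetric] by linarith
qed

lemma sq_deriv:
  fixes y :: "'a::euclidean_space"
  assumes C: "convex C" "closed C" "C \<noteq> {}"
  shows "((\<lambda>y. (norm (y - closest_point C y))\<^sup>2) has_derivative (\<lambda>h. 2 * inner (y - closest_point C y) h)) (at y)"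
  unfolding has_derivative_at_alt
proof (intro conjI allI impI)
  show "bounded_linear (\<lambda>h. 2 * inner (y - closest_point C y) h)"
    by (intro bounded_linear_intros)
  fix e :: real assume e: "e > 0"
  show "\<exists>d>0. \<forall>y'. norm (y' - y) < d \<longrightarrow>
      norm ((norm (y' - closest_point C y'))\<^sup>2 - (norm (y - closest_point C y))\<^sup>2 - 2 * inner (y - closest_point C y) (y' - y))
        \<le> e * norm (y' - y)"
  proof (intro exI[of _ e] conjI allI impI e)
    fix y' assume "norm (y' - y) < e"
    then have "(norm (y' - y))\<^sup>2 \<le> e * norm (y' - y)"
      by (simp add: power2_eq_square mult_right_mono)
    then show "norm ((norm (y' - closest_point C y'))\<^sup>2 - (norm (y - closest_point C y))\<^sup>2 - 2 * inner (y - closest_point C y) (y' - y))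
        \<le> e * norm (y' - y)"
      using sq_remainder[OF C, of y' y] by simp
  qed
qed
lemma grad_augLag:
  fixes f :: "'w::euclidean_space \<Rightarrow> real" and G :: "'w \<Rightarrow> 'y::euclidean_space"
  assumes f_deriv: "\<And>x. (f has_derivative blinfun_apply (f' x)) (at x)"
    and G_deriv: "\<And>x. (G has_derivative blinfun_apply (G' x)) (at x)"
    and C: "convex C" "closed C" "C \<noteq> {}"
  shows "grad (\<lambda>x. augLag f G C \<rho> x lam) x =
     adjoint (blinfun_apply (f' x)) 1 + \<rho> *\<^sub>R adjoint (blinfun_apply (G' x))
        ((G x + lam /\<^sub>R \<rho>) - projC C (G x + lam /\<^sub>R \<rho>))"
    (is "_ = ?g")
proof -
  define z where "z = G x + lam /\<^sub>R \<rho>"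
  have d1: "((\<lambda>x. G x + lam /\<^sub>R \<rho>) has_derivative blinfun_apply (G' x)) (at x)"
    using G_deriv[of x] by (auto intro!: derivative_eq_intros)
  have d2: "((\<lambda>x. (norm ((G x + lam /\<^sub>R \<rho>) - closest_point C (G x + lam /\<^sub>R \<rho>)))\<^sup>2) has_derivative
      (\<lambda>h. 2 * inner (z - closest_point C z) (blinfun_apply (G' x) h))) (at x)"
    using diff_chain_at[OF d1 sq_deriv[OF C, of "G x + lam /\<^sub>R \<rho>"]] unfolding z_def o_def .
  have d3: "((\<lambda>x. augLag f G C \<rho> x lam) has_derivative
     (\<lambda>h. blinfun_apply (f' x) h + \<rho> / 2 * (2 * inner (z - closest_point C z) (blinfun_apply (G' x) h)))) (at x)"
    unfolding augLag_def distC_def projC_def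
    by (intro derivative_intros f_deriv d2)
  have lf: "linear (blinfun_apply (f' x))" "linear (blinfun_apply (G' x))"
    by (simp_all add: blinfun.bounded_linear_right bounded_linear.linear)
  have eq: "(\<lambda>h. blinfun_apply (f' x) h + \<rho> / 2 * (2 * inner (z - closest_point C z) (blinfun_apply (G' x) h)))
      = (\<lambda>h. inner h ?g)"
  proof
    fix h
    have "inner h (adjoint (blinfun_apply (f' x)) 1) = blinfun_apply (f' x) h"
      using adjoint_works[OF lf(1), of h 1] by simp
    moreover have "inner h (adjoint (blinfun_apply (G' x)) (z - closest_point C z)) = inner (z - closest_point C z) (blinfun_apply (G' x) h)"
      using adjoint_works[OF lf(2), of h] by (simp add: inner_commute)
    ultimately show "blinfun_apply (f' x) h + \<rho> / 2 * (2 * inner (z - closest_point C z) (blinfun_apply (G' x) h)) = inner h ?g"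
      by (simp add: inner_add_right z_def projC_def)
  qed
  have gd: "GDERIV (\<lambda>x. augLag f G C \<rho> x lam) x :> ?g"
    unfolding gderiv_def using d3 eq by simp
  show ?thesis
    unfolding grad_def
  proof (rule the_equality)
    show "GDERIV (\<lambda>x. augLag f G C \<rho> x lam) x :> ?g" by (rule gd)
  next
    fix g' assume "GDERIV (\<lambda>x. augLag f G C \<rho> x lam) x :> g'"
    then have "(\<lambda>h. inner h g') = (\<lambda>h. inner h ?g)"
      using has_derivative_unique gd unfolding gderiv_def by blast
    then have "inner (g' - ?g) g' = inner (g' - ?g) ?g" by metis
    then have "inner (g' - ?g) (g' - ?g) = 0" by (simp add: inner_diff_right)
    then show "g' = ?g" by simp
  qed
qed
lemma adj_bound:
  fixes A B :: "'w::euclidean_space \<Rightarrow>\<^sub>L 'y::euclidean_space"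
  shows "norm (adjoint (blinfun_apply A) y - adjoint (blinfun_apply B) y')
     \<le> norm y * norm (A - B) + norm (y - y') * norm B"
proof -
  have lA: "linear (blinfun_apply A)" and lB: "linear (blinfun_apply B)"
    by (simp_all add: blinfun.bounded_linear_right bounded_linear.linear)
  define d where "d = adjoint (blinfun_apply A) y - adjoint (blinfun_apply B) y'"
  have "(norm d)\<^sup>2 = inner d d" by (simp add: power2_norm_eq_inner)
  also have "\<dots> = inner d (adjoint (blinfun_apply A) y) - inner d (adjoint (blinfun_apply B) y')"
    by (subst (2) d_def) (simp add: inner_diff_right)
  also have "\<dots> = inner (blinfun_apply A d) y - inner (blinfun_apply B d) y'"
    by (simp add: adjoint_works[OF lA] adjoint_works[OF lB])
  also have "\<dots> = inner (blinfun_apply (A - B) d) y + inner (blinfun_apply B d) (y - y')"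
    by (simp add: blinfun.diff_left inner_diff_left inner_diff_right)
  also have "\<dots> \<le> norm (blinfun_apply (A - B) d) * norm y + norm (blinfun_apply B d) * norm (y - y')"
    by (intro add_mono norm_cauchy_schwarz)
  also have "\<dots> \<le> (norm (A - B) * norm d) * norm y + (norm B * norm d) * norm (y - y')"
    by (intro add_mono mult_right_mono norm_blinfun norm_ge_zero)
  also have "\<dots> = norm d * (norm y * norm (A - B) + norm (y - y') * norm B)"
    by (simp add: algebra_simps)
  finally have *: "norm d * norm d \<le> norm d * (norm y * norm (A - B) + norm (y - y') * norm B)"
    by (simp add: power2_eq_square)
  show ?thesis
  proof (cases "norm d = 0")
    case True then show ?thesis unfolding d_def[symmetric] by (simp add: add_nonneg_nonneg)
  next
    case False then have "norm d > 0" by simp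
    with * show ?thesis unfolding d_def[symmetric] by simp
  qed
qed

lemma adj_tendsto:
  fixes A :: "nat \<Rightarrow> 'w::euclidean_space \<Rightarrow>\<^sub>L 'y::euclidean_space"
  assumes "A \<longlonglongrightarrow> B" "y \<longlonglongrightarrow> y'"
  shows "(\<lambda>j. adjoint (blinfun_apply (A j)) (y j)) \<longlonglongrightarrow> adjoint (blinfun_apply B) y'"
proof -
  have "(\<lambda>j. norm (y j) * norm (A j - B) + norm (y j - y') * norm B) \<longlonglongrightarrow> norm y' * norm (B - B) + norm (y' - y') * norm B"
    by (intro tendsto_intros assms)
  then have z: "(\<lambda>j. norm (y j) * norm (A j - B) + norm (y j - y') * norm B) \<longlonglongrightarrow> 0" by simp
  have "(\<lambda>j. adjoint (blinfun_apply (A j)) (y j) - adjoint (blinfun_apply B) y') \<longlonglongrightarrow> 0"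
    by (rule Lim_null_comparison[OF _ z]) (simp add: adj_bound)
  then show ?thesis by (simp add: LIM_zero_iff)
qed

lemma limNormal_D: "v \<in> limNormal D x \<Longrightarrow> x \<in> D"
  unfolding limNormal_def by (auto split: if_splits)

lemma limNormal_zero: "x \<in> D \<Longrightarrow> 0 \<in> limNormal D x"
proof -
  assume xD: "x \<in> D"
  have h0: "\<And>k::nat. (0::'a) \<in> {t *\<^sub>R (x - p) |t p. 0 \<le> t \<and> p \<in> projSet D x}"
    using xD by (auto simp: projSet_def intro!: exI[of _ "0::real"] exI[of _ x])
  show ?thesis unfolding limNormal_def if_P[OF xD]
    apply (rule CollectI)
    apply (rule exI[of _ "\<lambda>k::nat. x"])
    apply (rule exI[of _ "\<lambda>k::nat. 0::'a"])
    using h0 by auto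
qed

lemma limNormal_cone:
  assumes "v \<in> limNormal D x" "c \<ge> 0"
  shows "c *\<^sub>R v \<in> limNormal D x"
proof -
  have xD: "x \<in> D" using assms limNormal_D by blast
  from assms(1) xD obtain X vs where X: "X \<longlonglongrightarrow> x" "vs \<longlonglongrightarrow> v"
     "\<And>k. vs k \<in> {t *\<^sub>R (X k - p) | t p. t \<ge> 0 \<and> p \<in> projSet D (X k)}"
    unfolding limNormal_def by auto
  have "(\<lambda>k. c *\<^sub>R vs k) \<longlonglongrightarrow> c *\<^sub>R v" by (intro tendsto_intros X)
  moreover have "\<And>k. c *\<^sub>R vs k \<in> {t *\<^sub>R (X k - p) | t p. t \<ge> 0 \<and> p \<in> projSet D (X k)}"
  proof -
    fix k
    from X(3)[of k] obtain t p where "vs k = t *\<^sub>R (X k - p)" "t \<ge> 0" "p \<in> projSet D (X k)" by blast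
    then show "c *\<^sub>R vs k \<in> {t *\<^sub>R (X k - p) | t p. t \<ge> 0 \<and> p \<in> projSet D (X k)}"
      using assms(2) by (auto intro!: exI[of _ "c * t"] exI[of _ p])
  qed
  ultimately show ?thesis using xD X(1) unfolding limNormal_def by auto
qed

lemma limNormal_osc:
  fixes x :: "nat \<Rightarrow> 'a::euclidean_space"
  assumes xD: "wb \<in> D" and x: "x \<longlonglongrightarrow> wb" and a: "a \<longlonglongrightarrow> v"
    and aN: "\<And>j. a j \<in> limNormal D (x j)"
  shows "v \<in> limNormal D wb"
proof -
  have "\<forall>j. \<exists>yb. dist (fst yb) (x j) < inverse (real (Suc j)) \<and> dist (snd yb) (a j) < inverse (real (Suc j)) \<and>
      snd yb \<in> {t *\<^sub>R (fst yb - p) | t p. t \<ge> 0 \<and> p \<in> projSet D (fst yb)}"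
  proof
    fix j
    have e: "inverse (real (Suc j)) > 0" by simp
    have "x j \<in> D" using aN[of j] limNormal_D by blast
    with aN[of j] obtain X vs where X: "X \<longlonglongrightarrow> x j" "vs \<longlonglongrightarrow> a j"
       "\<And>k. vs k \<in> {t *\<^sub>R (X k - p) | t p. t \<ge> 0 \<and> p \<in> projSet D (X k)}"
      unfolding limNormal_def by auto
    have "eventually (\<lambda>k. dist (X k) (x j) < inverse (real (Suc j))) sequentially"
      using X(1) e by (rule tendstoD)
    moreover have "eventually (\<lambda>k. dist (vs k) (a j) < inverse (real (Suc j))) sequentially"
      using X(2) e by (rule tendstoD)
    ultimately obtain k where "dist (X k) (x j) < inverse (real (Suc j))" "dist (vs k) (a j) < inverse (real (Suc j))"
      using eventually_conj eventually_sequentially by (metis (no_types, lifting) order_refl)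
    then show "\<exists>yb. dist (fst yb) (x j) < inverse (real (Suc j)) \<and> dist (snd yb) (a j) < inverse (real (Suc j)) \<and>
      snd yb \<in> {t *\<^sub>R (fst yb - p) | t p. t \<ge> 0 \<and> p \<in> projSet D (fst yb)}"
      using X(3)[of k] by (intro exI[of _ "(X k, vs k)"]) auto
  qed
  from choice[OF this] obtain Y where Y0: "\<forall>j. dist (fst (Y j)) (x j) < inverse (real (Suc j)) \<and>
      dist (snd (Y j)) (a j) < inverse (real (Suc j)) \<and>
      snd (Y j) \<in> {t *\<^sub>R (fst (Y j) - p) | t p. t \<ge> 0 \<and> p \<in> projSet D (fst (Y j))}"
    by blast
  have Y: "\<And>j. dist (fst (Y j)) (x j) < inverse (real (Suc j))"
    "\<And>j. dist (snd (Y j)) (a j) < inverse (real (Suc j))"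
    "\<And>j. snd (Y j) \<in> {t *\<^sub>R (fst (Y j) - p) | t p. t \<ge> 0 \<and> p \<in> projSet D (fst (Y j))}"
    using Y0 by blast+
  have inv0: "(\<lambda>j. inverse (real (Suc j))) \<longlonglongrightarrow> 0" by (rule LIMSEQ_inverse_real_of_nat)
  have "(\<lambda>j. fst (Y j) - x j) \<longlonglongrightarrow> 0"
    by (rule Lim_null_comparison[OF _ inv0]) (use Y(1) in \<open>auto simp: dist_norm intro!: always_eventually less_imp_le\<close>)
  then have "(\<lambda>j. (fst (Y j) - x j) + x j) \<longlonglongrightarrow> 0 + wb" by (intro tendsto_intros x)
  then have Y1: "(\<lambda>j. fst (Y j)) \<longlonglongrightarrow> wb" by simp
  have "(\<lambda>j. snd (Y j) - a j) \<longlonglongrightarrow> 0"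
    by (rule Lim_null_comparison[OF _ inv0]) (use Y(2) in \<open>auto simp: dist_norm intro!: always_eventually less_imp_le\<close>)
  then have "(\<lambda>j. (snd (Y j) - a j) + a j) \<longlonglongrightarrow> 0 + v" by (intro tendsto_intros a)
  then have Y2: "(\<lambda>j. snd (Y j)) \<longlonglongrightarrow> v" by simp
  show ?thesis unfolding limNormal_def using xD Y1 Y2 Y(3) by auto
qed
theorem mainTheorem8:
  fixes f :: "'w::euclidean_space \<Rightarrow> real"
    and f' :: "'w \<Rightarrow> ('w \<Rightarrow>\<^sub>L real)"
    and G :: "'w \<Rightarrow> 'y::euclidean_space"
    and G' :: "'w \<Rightarrow> ('w \<Rightarrow>\<^sub>L 'y)"
    and C :: "'y set" and D :: "'w set"
    and \<rho>0 \<beta> \<eta> :: real and U :: "'y set"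
    and w :: "nat \<Rightarrow> 'w" and \<epsilon> :: "nat \<Rightarrow> 'w"
    and u :: "nat \<Rightarrow> 'y" and \<rho> :: "nat \<Rightarrow> real"
    and wbar :: 'w
  assumes f_deriv: "\<And>x. (f has_derivative blinfun_apply (f' x)) (at x)"
    and f'_cont: "continuous_on UNIV f'"
    and G_deriv: "\<And>x. (G has_derivative blinfun_apply (G' x)) (at x)"
    and G'_cont: "continuous_on UNIV G'"
    and C_ne: "C \<noteq> {}" and C_closed: "closed C" and C_convex: "convex C"
    and D_ne: "D \<noteq> {}" and D_closed: "closed D"
    and rho0_pos: "\<rho>0 > 0" and beta: "\<beta> > 1" and eta: "0 < \<eta>" "\<eta> < 1"
    and w0: "w 0 \<in> D"
    and U_ne: "U \<noteq> {}" and U_bdd: "bounded U"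
    and rho_0: "\<rho> 0 = \<rho>0"
    and u_in: "\<And>k. u k \<in> U"
    and step: "\<And>k. \<epsilon> (Suc k) \<in>
        (\<lambda>v. grad (\<lambda>x. augLag f G C (\<rho> k) x (u k)) (w (Suc k)) + v) ` limNormal D (w (Suc k))"
    and rho_upd: "\<And>k. \<rho> (Suc k) =
        (if k = 0 \<or> Vfun G C (\<rho> k) (w (Suc k)) (u k) \<le> \<eta> * Vfun G C (\<rho> (k - 1)) (w k) (u (k - 1))
         then \<rho> k else \<beta> * \<rho> k)"
    and eps_bdd: "bounded (range \<epsilon>)"
    and accum: "\<exists>r. strict_mono r \<and> (w \<circ> r) \<longlonglongrightarrow> wbar"
  shows "wbar \<in> D \<and>
         0 \<in> (\<lambda>v. adjoint (blinfun_apply (G' wbar)) (G wbar - projC C (G wbar)) + v) ` limNormal D wbar"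
proof -
  note Cp = C_convex C_closed C_ne
  have rho_pos: "\<rho> k > 0" for k
  proof (induction k)
    case 0 then show ?case using rho_0 rho0_pos by simp
  next
    case (Suc k) then show ?case using rho_upd[of k] beta by auto
  qed
  have rho_Suc: "\<rho> k \<le> \<rho> (Suc k)" for k
    using rho_upd[of k] rho_pos[of k] beta by auto
  have rho_inc: "incseq \<rho>" using rho_Suc by (simp add: incseq_SucI)
  have wD: "w k \<in> D" for k
  proof (cases k)
    case 0 then show ?thesis using w0 by simp
  next
    case (Suc m)
    from step[of m] obtain n where "n \<in> limNormal D (w (Suc m))" by blast
    then show ?thesis using Suc limNormal_D by blast
  qed
  from accum obtain r where r: "strict_mono r" "(w \<circ> r) \<longlonglongrightarrow> wbar" by blast
  have wbarD: "wbar \<in> D"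
    using closed_sequentially[OF D_closed _ r(2)] wD by auto
  define s where "s j = r (Suc j) - 1" for j
  have sS: "Suc (s j) = r (Suc j)" for j
    using seq_suble[OF r(1), of "Suc j"] unfolding s_def by simp
  have s_mono: "strict_mono s"
    unfolding strict_mono_Suc_iff
  proof
    fix j
    have "r (Suc j) < r (Suc (Suc j))" using r(1) by (simp add: strict_mono_def)
    then show "s j < s (Suc j)" using sS[of j] sS[of "Suc j"] by simp
  qed
  have s_fil: "filterlim s sequentially sequentially" by (rule filterlim_subseq[OF s_mono])
  have xconv: "(\<lambda>j. w (Suc (s j))) \<longlonglongrightarrow> wbar"
    using LIMSEQ_Suc[OF r(2)] by (simp add: sS o_def)
  define adjv where "adjv = adjoint (blinfun_apply (G' wbar)) (G wbar - projC C (G wbar))"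
  have key: "- adjv \<in> limNormal D wbar"
  proof (cases "\<exists>M. \<forall>k. \<rho> k \<le> M")
    case True
    then obtain M where M: "\<And>k. \<rho> k \<le> M" by blast
    have "\<exists>K. \<forall>k\<ge>K. \<rho> (Suc k) = \<rho> k"
    proof (rule ccontr)
      assume nK: "\<not> ?thesis"
      have inf: "\<exists>k\<ge>K. \<rho> (Suc k) = \<beta> * \<rho> k" for K
      proof -
        obtain k where k: "k \<ge> K" "\<rho> (Suc k) \<noteq> \<rho> k" using nK by blast
        then have "\<rho> (Suc k) = \<beta> * \<rho> k" using rho_upd[of k] by (simp split: if_splits)
        then show ?thesis using k by blast
      qed
      have "\<exists>k. \<rho>0 * \<beta> ^ n \<le> \<rho> k" for n
      proof (induction n)
        case 0 then show ?case using rho_0 by (auto intro!: exI[of _ 0])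
      next
        case (Suc n)
        then obtain k where k: "\<rho>0 * \<beta> ^ n \<le> \<rho> k" by blast
        obtain k' where k': "k' \<ge> k" "\<rho> (Suc k') = \<beta> * \<rho> k'" using inf by blast
        have "\<rho> k \<le> \<rho> k'" using rho_inc k'(1) by (simp add: incseq_def)
        then have "\<rho>0 * \<beta> ^ Suc n \<le> \<beta> * \<rho> k'" using k beta by (simp add: algebra_simps)
        then show ?case using k' by metis
      qed
      moreover obtain n where "M / \<rho>0 < \<beta> ^ n" using real_arch_pow[OF beta] by blast
      then have "M < \<rho>0 * \<beta> ^ n" using rho0_pos by (simp add: field_simps)
      ultimately obtain k where "\<rho>0 * \<beta> ^ n \<le> \<rho> k" "M < \<rho>0 * \<beta> ^ n" by blast
      then show False using M[of k] by linarith
    qed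
    then obtain K where K: "\<And>k. k \<ge> K \<Longrightarrow> \<rho> (Suc k) = \<rho> k" by blast
    define V where "V k = Vfun G C (\<rho> k) (w (Suc k)) (u k)" for k
    have Vnn: "V k \<ge> 0" for k unfolding V_def Vfun_def by simp
    have Vdec: "V k \<le> \<eta> * V (k - 1)" if "k \<ge> Suc K" for k
    proof -
      have "\<rho> (Suc k) = \<rho> k" using K that by simp
      moreover have "\<beta> * \<rho> k \<noteq> \<rho> k" using beta rho_pos[of k] by simp
      ultimately show ?thesis using rho_upd[of k] that unfolding V_def by (auto split: if_splits)
    qed
    have Vgeo: "V (n + Suc K) \<le> \<eta> ^ n * V (Suc K)" for n
    proof (induction n)
      case 0 then show ?case by simp
    next
      case (Suc n)
      have "V (Suc n + Suc K) \<le> \<eta> * V (n + Suc K)" using Vdec[of "Suc n + Suc K"] by simp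
      also have "\<dots> \<le> \<eta> * (\<eta> ^ n * V (Suc K))" using Suc eta by (simp add: mult_left_mono)
      finally show ?case by simp
    qed
    have "(\<lambda>n. \<eta> ^ n * V (Suc K)) \<longlonglongrightarrow> 0 * V (Suc K)"
      using eta by (intro tendsto_intros) simp
    then have g0: "(\<lambda>n. \<eta> ^ n * V (Suc K)) \<longlonglongrightarrow> 0" by simp
    have bnd: "\<forall>n. norm (V (n + Suc K)) \<le> \<eta> ^ n * V (Suc K)"
    proof
      fix n
      have "norm (V (n + Suc K)) = V (n + Suc K)" using Vnn[of "n + Suc K"] by simp
      then show "norm (V (n + Suc K)) \<le> \<eta> ^ n * V (Suc K)" using Vgeo[of n] by linarith
    qed
    have "(\<lambda>n. V (n + Suc K)) \<longlonglongrightarrow> 0"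
      by (rule Lim_null_comparison[OF always_eventually[OF bnd] g0])
    then have V0: "V \<longlonglongrightarrow> 0" by (rule LIMSEQ_offset)
    have Vs0: "(\<lambda>j. V (s j)) \<longlonglongrightarrow> 0" using LIMSEQ_subseq_LIMSEQ[OF V0 s_mono] by (simp add: o_def)
    have idle: "infdist (G (w (Suc (s j)))) C \<le> V (s j)" for j
    proof -
      have "projC C (G (w (Suc (s j))) + u (s j) /\<^sub>R \<rho> (s j)) \<in> C"
        unfolding projC_def by (rule closest_point_in_set[OF C_closed C_ne])
      from infdist_le[OF this, of "G (w (Suc (s j)))"] show ?thesis
        unfolding V_def Vfun_def by (simp add: dist_norm)
    qed
    have "(\<lambda>j. infdist (G (w (Suc (s j)))) C) \<longlonglongrightarrow> 0"
      by (rule Lim_null_comparison[OF _ Vs0]) (auto simp: idle infdist_nonneg)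
    moreover have Gc: "isCont G wbar" using G_deriv[of wbar] by (rule has_derivative_continuous)
    have "(\<lambda>j. infdist (G (w (Suc (s j)))) C) \<longlonglongrightarrow> infdist (G wbar) C"
      by (intro tendsto_infdist isCont_tendsto_compose[OF Gc xconv])
    ultimately have "infdist (G wbar) C = 0" using LIMSEQ_unique by blast
    then have "G wbar \<in> C" using in_closed_iff_infdist_zero[OF C_closed C_ne] by blast
    then have "projC C (G wbar) = G wbar" unfolding projC_def by (rule closest_point_self)
    moreover have "linear (adjoint (blinfun_apply (G' wbar)))"
      by (intro adjoint_linear bounded_linear.linear blinfun.bounded_linear_right)
    ultimately have "adjv = 0" unfolding adjv_def by (simp add: linear_0)
    then show ?thesis using limNormal_zero[OF wbarD] by simp
  next
    case False
    have rho_top: "filterlim \<rho> at_top sequentially"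
      unfolding filterlim_at_top
    proof
      fix Z
      from False obtain k where k: "\<not> \<rho> k \<le> Z" by blast
      have "\<forall>k'\<ge>k. Z \<le> \<rho> k'"
      proof (intro allI impI)
        fix k' assume "k \<le> k'"
        then have "\<rho> k \<le> \<rho> k'" using rho_inc by (simp add: incseq_def)
        then show "Z \<le> \<rho> k'" using k by linarith
      qed
      then show "eventually (\<lambda>k. Z \<le> \<rho> k) sequentially"
        unfolding eventually_sequentially by blast
    qed
    have rs_top: "filterlim (\<lambda>j. \<rho> (s j)) at_top sequentially"
      by (rule filterlim_compose[OF rho_top s_fil])
    have inv0: "(\<lambda>j. inverse (\<rho> (s j))) \<longlonglongrightarrow> 0"
      by (rule tendsto_inverse_0_at_top[OF rs_top])
    define z where "z k = G (w (Suc k)) + u k /\<^sub>R \<rho> k" for k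
    define gr where "gr k = adjoint (blinfun_apply (f' (w (Suc k)))) 1
        + \<rho> k *\<^sub>R adjoint (blinfun_apply (G' (w (Suc k)))) (z k - projC C (z k))" for k
    have ex: "\<forall>k. \<exists>n. n \<in> limNormal D (w (Suc k)) \<and> \<epsilon> (Suc k) = gr k + n"
    proof
      fix k
      from step[of k] obtain n where n: "n \<in> limNormal D (w (Suc k))"
        "\<epsilon> (Suc k) = grad (\<lambda>x. augLag f G C (\<rho> k) x (u k)) (w (Suc k)) + n" by blast
      have "grad (\<lambda>x. augLag f G C (\<rho> k) x (u k)) (w (Suc k)) = gr k"
        unfolding gr_def z_def by (rule grad_augLag[OF f_deriv G_deriv Cp])
      then show "\<exists>n. n \<in> limNormal D (w (Suc k)) \<and> \<epsilon> (Suc k) = gr k + n" using n by (intro exI[of _ n]) simp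
    qed
    from choice[OF ex] obtain nn where nn0: "\<forall>k. nn k \<in> limNormal D (w (Suc k)) \<and> \<epsilon> (Suc k) = gr k + nn k"
      by blast
    have nn: "\<And>k. nn k \<in> limNormal D (w (Suc k))" "\<And>k. \<epsilon> (Suc k) = gr k + nn k"
      using nn0 by blast+
    define a where "a j = inverse (\<rho> (s j)) *\<^sub>R nn (s j)" for j
    have a_in: "a j \<in> limNormal D (w (Suc (s j)))" for j
      unfolding a_def by (rule limNormal_cone[OF nn(1)]) (use rho_pos[of "s j"] in simp)
    have a_eq: "a j = inverse (\<rho> (s j)) *\<^sub>R \<epsilon> (Suc (s j))
        - inverse (\<rho> (s j)) *\<^sub>R adjoint (blinfun_apply (f' (w (Suc (s j))))) 1
        - adjoint (blinfun_apply (G' (w (Suc (s j))))) (z (s j) - projC C (z (s j)))" for j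
    proof -
      have "nn (s j) = \<epsilon> (Suc (s j)) - gr (s j)" using nn(2)[of "s j"] by simp
      moreover have "\<rho> (s j) \<noteq> 0" using rho_pos[of "s j"] by simp
      ultimately show ?thesis
      proof -
        assume e1: "nn (s j) = \<epsilon> (Suc (s j)) - gr (s j)" and r0: "\<rho> (s j) \<noteq> 0"
        define A where "A = adjoint (blinfun_apply (f' (w (Suc (s j))))) 1"
        define Bv where "Bv = adjoint (blinfun_apply (G' (w (Suc (s j))))) (z (s j) - projC C (z (s j)))"
        have "a j = inverse (\<rho> (s j)) *\<^sub>R (\<epsilon> (Suc (s j)) - (A + \<rho> (s j) *\<^sub>R Bv))"
          unfolding a_def e1 gr_def A_def Bv_def by (rule refl)
        also have "\<dots> = inverse (\<rho> (s j)) *\<^sub>R \<epsilon> (Suc (s j)) - inverse (\<rho> (s j)) *\<^sub>R A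
            - (inverse (\<rho> (s j)) * \<rho> (s j)) *\<^sub>R Bv"
          by (simp only: scaleR_diff_right scaleR_add_right scaleR_scaleR diff_diff_eq)
        also have "inverse (\<rho> (s j)) * \<rho> (s j) = 1" using r0 by simp
        finally show ?thesis unfolding A_def Bv_def by (simp only: scaleR_one)
      qed
    qed
    obtain B where B: "\<And>k. norm (\<epsilon> k) \<le> B" using eps_bdd unfolding bounded_iff by blast
    obtain Bu where Bu: "\<And>k. norm (u k) \<le> Bu" using U_bdd u_in unfolding bounded_iff by blast
    have l1: "(\<lambda>j. inverse (\<rho> (s j)) *\<^sub>R \<epsilon> (Suc (s j))) \<longlonglongrightarrow> 0"
    proof (rule Lim_null_comparison)
      show "(\<lambda>j. inverse (\<rho> (s j)) * B) \<longlonglongrightarrow> 0" by (rule tendsto_mult_left_zero[OF inv0])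
      show "eventually (\<lambda>j. norm (inverse (\<rho> (s j)) *\<^sub>R \<epsilon> (Suc (s j))) \<le> inverse (\<rho> (s j)) * B) sequentially"
      proof (intro always_eventually allI)
        fix j
        have "inverse (\<rho> (s j)) > 0" using rho_pos[of "s j"] by simp
        then have "norm (inverse (\<rho> (s j)) *\<^sub>R \<epsilon> (Suc (s j))) = inverse (\<rho> (s j)) * norm (\<epsilon> (Suc (s j)))"
          by (simp only: norm_scaleR abs_of_pos)
        also have "\<dots> \<le> inverse (\<rho> (s j)) * B"
          by (rule mult_left_mono[OF B]) (use \<open>inverse (\<rho> (s j)) > 0\<close> in linarith)
        finally show "norm (inverse (\<rho> (s j)) *\<^sub>R \<epsilon> (Suc (s j))) \<le> inverse (\<rho> (s j)) * B" .
      qed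
    qed
    have lu: "(\<lambda>j. u (s j) /\<^sub>R \<rho> (s j)) \<longlonglongrightarrow> 0"
    proof (rule Lim_null_comparison)
      show "(\<lambda>j. inverse (\<rho> (s j)) * Bu) \<longlonglongrightarrow> 0" by (rule tendsto_mult_left_zero[OF inv0])
      show "eventually (\<lambda>j. norm (u (s j) /\<^sub>R \<rho> (s j)) \<le> inverse (\<rho> (s j)) * Bu) sequentially"
      proof (intro always_eventually allI)
        fix j
        have "inverse (\<rho> (s j)) > 0" using rho_pos[of "s j"] by simp
        then have "norm (inverse (\<rho> (s j)) *\<^sub>R u (s j)) = inverse (\<rho> (s j)) * norm (u (s j))"
          by (simp only: norm_scaleR abs_of_pos)
        also have "\<dots> \<le> inverse (\<rho> (s j)) * Bu"
          by (rule mult_left_mono[OF Bu]) (use \<open>inverse (\<rho> (s j)) > 0\<close> in linarith)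
        finally show "norm (u (s j) /\<^sub>R \<rho> (s j)) \<le> inverse (\<rho> (s j)) * Bu" .
      qed
    qed
    have f'c: "(\<lambda>j. f' (w (Suc (s j)))) \<longlonglongrightarrow> f' wbar"
      by (rule continuous_on_tendsto_compose[OF f'_cont xconv]) simp_all
    have G'c: "(\<lambda>j. G' (w (Suc (s j)))) \<longlonglongrightarrow> G' wbar"
      by (rule continuous_on_tendsto_compose[OF G'_cont xconv]) simp_all
    have "(\<lambda>j. adjoint (blinfun_apply (f' (w (Suc (s j))))) 1) \<longlonglongrightarrow> adjoint (blinfun_apply (f' wbar)) 1"
      by (rule adj_tendsto[OF f'c tendsto_const])
    from tendsto_scaleR[OF inv0 this]
    have l2: "(\<lambda>j. inverse (\<rho> (s j)) *\<^sub>R adjoint (blinfun_apply (f' (w (Suc (s j))))) 1) \<longlonglongrightarrow> 0"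
      by simp
    have Gc: "isCont G wbar" using G_deriv[of wbar] by (rule has_derivative_continuous)
    have "(\<lambda>j. G (w (Suc (s j))) + u (s j) /\<^sub>R \<rho> (s j)) \<longlonglongrightarrow> G wbar + 0"
      by (intro tendsto_add isCont_tendsto_compose[OF Gc xconv] lu)
    then have zc: "(\<lambda>j. z (s j)) \<longlonglongrightarrow> G wbar" unfolding z_def by simp
    have Pc: "isCont (closest_point C) (G wbar)"
      using continuous_at_closest_point[OF Cp] .
    have "(\<lambda>j. z (s j) - closest_point C (z (s j))) \<longlonglongrightarrow> G wbar - closest_point C (G wbar)"
      by (intro tendsto_diff zc isCont_tendsto_compose[OF Pc zc])
    then have "(\<lambda>j. z (s j) - projC C (z (s j))) \<longlonglongrightarrow> G wbar - projC C (G wbar)"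
      by (simp add: projC_def)
    from adj_tendsto[OF G'c this]
    have l3: "(\<lambda>j. adjoint (blinfun_apply (G' (w (Suc (s j))))) (z (s j) - projC C (z (s j)))) \<longlonglongrightarrow> adjv"
      unfolding adjv_def .
    have "(\<lambda>j. inverse (\<rho> (s j)) *\<^sub>R \<epsilon> (Suc (s j))
        - inverse (\<rho> (s j)) *\<^sub>R adjoint (blinfun_apply (f' (w (Suc (s j))))) 1
        - adjoint (blinfun_apply (G' (w (Suc (s j))))) (z (s j) - projC C (z (s j)))) \<longlonglongrightarrow> 0 - 0 - adjv"
      by (intro tendsto_diff l1 l2 l3)
    moreover have "a = (\<lambda>j. inverse (\<rho> (s j)) *\<^sub>R \<epsilon> (Suc (s j))
        - inverse (\<rho> (s j)) *\<^sub>R adjoint (blinfun_apply (f' (w (Suc (s j))))) 1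
        - adjoint (blinfun_apply (G' (w (Suc (s j))))) (z (s j) - projC C (z (s j))))"
      by (rule ext) (rule a_eq)
    ultimately have "a \<longlonglongrightarrow> 0 - 0 - adjv" by simp
    then have "a \<longlonglongrightarrow> - adjv" by simp
    then show ?thesis by (rule limNormal_osc[OF wbarD xconv _ a_in])
  qed
  have "0 \<in> (\<lambda>v. adjv + v) ` limNormal D wbar" by (rule image_eqI[OF _ key]) simp
  then show ?thesis using wbarD unfolding adjv_def by (intro conjI)
qed
end
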